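(* Let $B$ be a real Banach space with norm $|\cdot|$, and $H$ a real Hilbert space that is a dense linear subspace of $B$ such that the inclusion map $H\to B$ is continuous. Then: (i) If $L$ is a closed codimension-one subspace of $B$, then there is a unique closed codimension-one subspace $M$ of $H$ whose closure in $B$ is $L$; namely $M=L\cap H$. (ii) Let $f_0\in H^*$ be nonzero. If $f_0$ is continuous with respect to $|\cdot|$, then the closure of $\ker f_0$ in $B$ is a codimension-one subspace of $B$; if $f_0$ is not continuous with respect to $|\cdot|$, then $\ker f_0$ is dense in $B$.
   Context: Here $H^*$ is the space of continuous linear functionals on $H$ with respect to the Hilbert norm; "continuous with respect to $|\cdot|$" means continuous for the restriction to $H$ of the Banach norm of $B$. *)

theory Defs
  imports "HOL-Analysis.Analysis"
begin

definition codim_one :: "'a::real_vector set \<Rightarrow> bool" where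
  "codim_one S \<longleftrightarrow> subspace S \<and> (\<exists>v. v \<notin> S \<and> span (insert v S) = UNIV)"

end

theory Submission
  imports Defs
begin

lemma codim_one_decomp:
  assumes "codim_one S" "w \<notin> S"
  shows "\<exists>t. x - t *\<^sub>R w \<in> S"
proof -
  obtain v where S: "subspace S" "v \<notin> S" "span (insert v S) = UNIV"
    using assms unfolding codim_one_def by auto
  have sp: "span S = S" using S(1) by (simp add: span_eq_iff)
  have all: "\<exists>k. y - k *\<^sub>R v \<in> S" for y
  proof -
    have "y \<in> span (insert v S)" by (simp add: S(3))
    then show ?thesis by (simp add: span_insert sp)
  qed
  obtain k where k: "w - k *\<^sub>R v \<in> S" using all by blast
  obtain k' where k': "x - k' *\<^sub>R v \<in> S" using all by blast
  have k0: "k \<noteq> 0" using k assms(2) by auto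
  have "(x - k' *\<^sub>R v) - (k'/k) *\<^sub>R (w - k *\<^sub>R v) \<in> S"
    using k k' S(1) by (simp add: subspace_diff subspace_scale)
  moreover have "(x - k' *\<^sub>R v) - (k'/k) *\<^sub>R (w - k *\<^sub>R v) = x - (k'/k) *\<^sub>R w"
    using k0 by (simp add: algebra_simps)
  ultimately show ?thesis by metis
qed

lemma codim_one_intro:
  assumes "subspace S" "w \<notin> S" "\<And>x. \<exists>t. x - t *\<^sub>R w \<in> S"
  shows "codim_one S"
proof -
  have sp: "span S = S" using assms(1) by (simp add: span_eq_iff)
  have "span (insert w S) = UNIV"
    using assms(3) by (auto simp: span_insert sp)
  then show ?thesis using assms unfolding codim_one_def by blast
qed

lemma codim_one_maximal:
  assumes "codim_one M" "subspace N" "M \<subseteq> N" "N \<noteq> UNIV"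
  shows "M = N"
proof (rule ccontr)
  assume "M \<noteq> N"
  then obtain n where n: "n \<in> N" "n \<notin> M" using assms(3) by blast
  have "x \<in> N" for x
  proof -
    obtain t where "x - t *\<^sub>R n \<in> M" using codim_one_decomp[OF assms(1) n(2)] by blast
    then have "x - t *\<^sub>R n \<in> N" using assms(3) by blast
    then have "(x - t *\<^sub>R n) + t *\<^sub>R n \<in> N"
      using n(1) assms(2) by (metis subspace_add subspace_scale)
    then show ?thesis by simp
  qed
  then show False using assms(4) by blast
qed

lemma infdist_bound:
  fixes L :: "'a::real_normed_vector set"
  assumes "subspace L" "z - t *\<^sub>R u \<in> L"
  shows "\<bar>t\<bar> * infdist u L \<le> norm z"
proof (cases "t = 0")
  case True then show ?thesis by simp
next
  case False
  have "(- (1/t)) *\<^sub>R (z - t *\<^sub>R u) \<in> L" using assms by (metis subspace_scale)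
  moreover have "(- (1/t)) *\<^sub>R (z - t *\<^sub>R u) = u - (1/t) *\<^sub>R z"
    using False by (simp add: algebra_simps)
  ultimately have "infdist u L \<le> dist u (u - (1/t) *\<^sub>R z)"
    by (metis infdist_le)
  also have "\<dots> = norm z / \<bar>t\<bar>" by (simp add: dist_norm divide_inverse mult.commute)
  finally show ?thesis using False by (simp add: field_simps)
qed

lemma subspace_closure_lemma:
  fixes S :: "'a::real_normed_vector set"
  assumes "subspace S"
  shows "subspace (closure S)"
  unfolding subspace_def
proof (intro conjI ballI allI)
  show "0 \<in> closure S" using assms closure_subset subspace_0 by blast
next
  fix x y assume x: "x \<in> closure S" and y: "y \<in> closure S"
  show "x + y \<in> closure S" unfolding closure_approachable
  proof (intro allI impI)
    fix e :: real assume e: "e > 0"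
    obtain a where a: "a \<in> S" "dist a x < e/2" using x e unfolding closure_approachable
      by (meson half_gt_zero)
    obtain b where b: "b \<in> S" "dist b y < e/2" using y e unfolding closure_approachable
      by (meson half_gt_zero)
    have "a + b \<in> S" using a b assms by (simp add: subspace_add)
    moreover have "dist (a + b) (x + y) < e"
    proof -
      have "dist (a + b) (x + y) \<le> dist a x + dist b y"
        by (simp add: dist_norm add_diff_add norm_triangle_ineq)
      then show ?thesis using a b by linarith
    qed
    ultimately show "\<exists>z\<in>S. dist z (x + y) < e" by blast
  qed
next
  fix c :: real and x assume x: "x \<in> closure S"
  show "c *\<^sub>R x \<in> closure S"
  proof (cases "c = 0")
    case True then show ?thesis using assms closure_subset subspace_0 by auto
  next
    case False
    show ?thesis unfolding closure_approachable
    proof (intro allI impI)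
      fix e :: real assume e: "e > 0"
      have "e / \<bar>c\<bar> > 0" using e False by simp
      then obtain a where a: "a \<in> S" "dist a x < e / \<bar>c\<bar>" using x unfolding closure_approachable
        by blast
      have "c *\<^sub>R a \<in> S" using a assms by (simp add: subspace_scale)
      moreover have "dist (c *\<^sub>R a) (c *\<^sub>R x) < e"
      proof -
        have "dist (c *\<^sub>R a) (c *\<^sub>R x) = \<bar>c\<bar> * dist a x"
          by (simp add: dist_norm flip: scaleR_diff_right)
        also have "\<dots> < \<bar>c\<bar> * (e / \<bar>c\<bar>)" using a False by (intro mult_strict_left_mono) auto
        also have "\<dots> = e" using False by simp
        finally show ?thesis .
      qed
      ultimately show "\<exists>z\<in>S. dist z (c *\<^sub>R x) < e" by blast
    qed
  qed
qed


lemma bound_imp_ucont: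
  fixes i :: "'h::real_normed_vector \<Rightarrow> 'b::real_normed_vector" and f0 :: "'h \<Rightarrow> real"
  assumes li: "linear i" and inj: "inj i" and lf: "linear f0" and C: "C > 0"
    and bd: "\<And>h. \<bar>f0 h\<bar> \<le> C * norm (i h)"
  shows "uniformly_continuous_on (range i) (f0 \<circ> inv i)"
  unfolding uniformly_continuous_on_def
proof (intro allI impI)
  fix e :: real assume e: "e > 0"
  show "\<exists>d>0. \<forall>x\<in>range i. \<forall>x'\<in>range i. dist x' x < d \<longrightarrow> dist ((f0 \<circ> inv i) x') ((f0 \<circ> inv i) x) < e"
  proof (intro exI[of _ "e / C"] conjI ballI impI)
    show "e / C > 0" using e C by simp
    fix x x' assume x: "x \<in> range i" and x': "x' \<in> range i" and d: "dist x' x < e / C"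
    obtain a where a: "x = i a" using x by blast
    obtain b where b: "x' = i b" using x' by blast
    have "dist ((f0 \<circ> inv i) x') ((f0 \<circ> inv i) x) = \<bar>f0 (b - a)\<bar>"
      using inj a b by (simp add: dist_real_def linear_diff[OF lf])
    also have "\<dots> \<le> C * norm (i (b - a))" by (rule bd)
    also have "\<dots> = C * dist x' x" using a b by (simp add: dist_norm linear_diff[OF li])
    also have "\<dots> < C * (e / C)" using d C by (intro mult_strict_left_mono) auto
    also have "\<dots> = e" using C by simp
    finally show "dist ((f0 \<circ> inv i) x') ((f0 \<circ> inv i) x) < e" .
  qed
qed

lemma cont_imp_bound:
  fixes i :: "'h::real_normed_vector \<Rightarrow> 'b::real_normed_vector" and f0 :: "'h \<Rightarrow> real"
  assumes li: "linear i" and inj: "inj i" and lf: "linear f0"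
    and cont: "continuous_on (range i) (f0 \<circ> inv i)"
  shows "\<exists>C>0. \<forall>h. \<bar>f0 h\<bar> \<le> C * norm (i h)"
proof -
  have i0: "i 0 = 0" using linear_0[OF li] .
  have "0 \<in> range i" using i0 by (metis rangeI)
  then obtain \<delta> where \<delta>: "\<delta> > 0" "\<forall>y\<in>range i. dist y 0 < \<delta> \<longrightarrow> dist ((f0 \<circ> inv i) y) ((f0 \<circ> inv i) 0) < 1"
    using cont unfolding continuous_on_iff by (meson zero_less_one)
  have g0: "(f0 \<circ> inv i) 0 = 0" using i0 inj linear_0[OF lf] by (metis comp_apply inv_f_f)
  have "\<bar>f0 h\<bar> \<le> (2/\<delta>) * norm (i h)" for h
  proof (cases "i h = 0")
    case True
    then have "h = 0" using i0 inj by (metis injD)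
    then show ?thesis using linear_0[OF lf] i0 by simp
  next
    case False
    define s where "s = \<delta> / (2 * norm (i h))"
    have s: "s > 0" using False \<delta> by (simp add: s_def)
    have "norm (i (s *\<^sub>R h)) = \<delta>/2"
      using False \<delta> by (simp add: s_def linear_scale[OF li])
    then have "dist (i (s *\<^sub>R h)) 0 < \<delta>" using \<delta> by simp
    then have "dist ((f0 \<circ> inv i) (i (s *\<^sub>R h))) 0 < 1" using \<delta> g0 by auto
    then have "s * \<bar>f0 h\<bar> < 1" using inj s by (simp add: linear_scale[OF lf] abs_mult)
    then have "\<bar>f0 h\<bar> < 1 / s" using s by (simp add: field_simps)
    also have "1 / s = (2/\<delta>) * norm (i h)" using \<delta> False by (simp add: s_def)
    finally show ?thesis by simp
  qed
  then show ?thesis using \<delta> by (intro exI[of _ "2/\<delta>"]) auto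
qed


lemma part1:
  fixes i :: "'h::real_normed_vector \<Rightarrow> 'b::real_normed_vector"
  assumes bl: "bounded_linear i" and dense: "closure (range i) = UNIV"
    and L: "closed L" "codim_one L"
  shows "(closed (i -` L) \<and> codim_one (i -` L) \<and> closure (i ` (i -` L)) = L) \<and>
        (\<forall>M::'h set. closed M \<and> codim_one M \<and> closure (i ` M) = L \<longrightarrow> M = i -` L)"
proof -
  have li: "linear i" using bl bounded_linear.linear by blast
  have subL: "subspace L" using L(2) unfolding codim_one_def by blast
  obtain h0 where h0: "i h0 \<notin> L"
  proof (rule ccontr)
    assume "\<not> thesis"
    then have "range i \<subseteq> L" using that by blast
    then have "closure (range i) \<subseteq> L" using closure_minimal[OF _ L(1)] by blast
    then have "UNIV \<subseteq> L" using dense by simp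
    then show False using L(2) unfolding codim_one_def by blast
  qed
  define u0 where "u0 = i h0"
  have cl: "closed (i -` L)"
    using continuous_closed_vimage[OF L(1)] linear_continuous_at[OF bl] by blast
  have subV: "subspace (i -` L)" using linear_subspace_vimage[OF li subL] .
  have h0V: "h0 \<notin> i -` L" using h0 by simp
  have co: "codim_one (i -` L)"
  proof (rule codim_one_intro[OF subV h0V])
    fix x
    obtain t where "i x - t *\<^sub>R i h0 \<in> L" using codim_one_decomp[OF L(2) h0] by blast
    then have "i (x - t *\<^sub>R h0) \<in> L" by (simp add: linear_diff[OF li] linear_scale[OF li])
    then show "\<exists>t. x - t *\<^sub>R h0 \<in> i -` L" by blast
  qed
  have "L \<noteq> {}" using subL subspace_0 by blast
  then have d: "infdist u0 L > 0" using infdist_pos_not_in_closed[OF L(1)] h0 u0_def by blast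
  define d where "d = infdist u0 L"
  have dpos: "d > 0" using d d_def by simp
  have clo: "closure (i ` (i -` L)) = L"
  proof
    show "closure (i ` (i -` L)) \<subseteq> L" by (rule closure_minimal[OF image_vimage_subset L(1)])
  next
    show "L \<subseteq> closure (i ` (i -` L))"
    proof
      fix x assume x: "x \<in> L"
      show "x \<in> closure (i ` (i -` L))" unfolding closure_approachable
      proof (intro allI impI)
        fix e :: real assume e: "e > 0"
        define \<delta> where "\<delta> = e * d / (d + norm u0)"
        have dp: "\<delta> > 0" using e dpos by (simp add: \<delta>_def add_pos_nonneg)
        have "x \<in> closure (range i)" using dense by simp
        then obtain y where y: "y \<in> range i" "dist y x < \<delta>" using dp unfolding closure_approachable by blast
        obtain h where h: "y = i h" using y by blast
        obtain t where t: "y - t *\<^sub>R u0 \<in> L" using codim_one_decomp[OF L(2)] h0 u0_def by blast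
        have "(y - t *\<^sub>R u0) - x \<in> L" using t x subL by (simp add: subspace_diff)
        moreover have "(y - t *\<^sub>R u0) - x = (y - x) - t *\<^sub>R u0" by (simp add: algebra_simps)
        ultimately have "(y - x) - t *\<^sub>R u0 \<in> L" by simp
        then have "\<bar>t\<bar> * d \<le> norm (y - x)" unfolding d_def by (rule infdist_bound[OF subL])
        also have "\<dots> < \<delta>" using y by (simp add: dist_norm)
        finally have td: "\<bar>t\<bar> * d < \<delta>" .
        have tn: "\<bar>t\<bar> * norm u0 \<le> \<delta> / d * norm u0"
        proof (rule mult_right_mono)
          show "\<bar>t\<bar> \<le> \<delta> / d" using td dpos by (simp add: field_simps)
        qed simp
        have mem: "y - t *\<^sub>R u0 \<in> i ` (i -` L)"
        proof -
          have "y - t *\<^sub>R u0 = i (h - t *\<^sub>R h0)"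
            using h u0_def by (simp add: linear_diff[OF li] linear_scale[OF li])
          then show ?thesis using t by (metis imageI vimageI2)
        qed
        have "dist (y - t *\<^sub>R u0) x = norm ((y - x) - t *\<^sub>R u0)" by (simp add: dist_norm algebra_simps)
        also have "\<dots> \<le> norm (y - x) + \<bar>t\<bar> * norm u0" using norm_triangle_ineq4[of "y - x" "t *\<^sub>R u0"] by simp
        also have "\<dots> < \<delta> + \<delta> / d * norm u0" using y tn by (simp add: dist_norm)
        also have "\<dots> = \<delta> * (d + norm u0) / d" using dpos by (simp add: field_simps)
        also have "\<dots> = e"
        proof -
          have "d + norm u0 > 0" using dpos norm_ge_zero[of u0] by linarith
          then show ?thesis using dpos by (simp add: \<delta>_def)
        qed
        finally show "\<exists>z\<in>i ` (i -` L). dist z x < e" using mem by blast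
      qed
    qed
  qed
  have uniq: "M = i -` L" if M: "closed M" "codim_one M" "closure (i ` M) = L" for M
  proof (rule codim_one_maximal[OF M(2) subV])
    show "M \<subseteq> i -` L" using M(3) closure_subset by blast
    show "i -` L \<noteq> UNIV" using h0V by blast
  qed
  show ?thesis using cl co clo uniq by blast
qed


lemma part2:
  fixes i :: "'h::real_normed_vector \<Rightarrow> 'b::banach" and f0 :: "'h \<Rightarrow> real"
  assumes bl: "bounded_linear i" and inj: "inj i" and dense: "closure (range i) = UNIV"
    and bf: "bounded_linear f0" and nz: "f0 \<noteq> (\<lambda>_. 0)"
  shows "(continuous_on (range i) (f0 \<circ> inv i) \<longrightarrow> codim_one (closure (i ` {h. f0 h = 0}))) \<and>
        (\<not> continuous_on (range i) (f0 \<circ> inv i) \<longrightarrow> closure (i ` {h. f0 h = 0}) = UNIV)"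
proof -
  have li: "linear i" using bl bounded_linear.linear by blast
  have lf: "linear f0" using bf bounded_linear.linear by blast
  obtain h0 where h0: "f0 h0 \<noteq> 0" using nz by blast
  define h1 where "h1 = (1 / f0 h0) *\<^sub>R h0"
  have h1: "f0 h1 = 1" using h0 by (simp add: h1_def linear_scale[OF lf])
  define K0 where "K0 = {h. f0 h = 0}"
  have subK0: "subspace K0" unfolding K0_def using linear_subspace_kernel[OF lf] .
  have kerm: "h - f0 h *\<^sub>R h1 \<in> K0" for h
    using h1 by (simp add: K0_def linear_diff[OF lf] linear_scale[OF lf])
  have part_a: "codim_one (closure (i ` K0))" if cont: "continuous_on (range i) (f0 \<circ> inv i)"
  proof -
    obtain C where C: "C > 0" "\<And>h. \<bar>f0 h\<bar> \<le> C * norm (i h)"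
      using cont_imp_bound[OF li inj lf cont] by blast
    have uc: "uniformly_continuous_on (range i) (f0 \<circ> inv i)"
      using bound_imp_ucont[OF li inj lf C] .
    obtain F where F: "uniformly_continuous_on (closure (range i)) F"
        "\<And>x. x \<in> range i \<Longrightarrow> (f0 \<circ> inv i) x = F x"
      using uniformly_continuous_on_extension_on_closure[OF uc] by metis
    have Fc: "continuous_on UNIV F" using F(1) dense uniformly_continuous_imp_continuous by metis
    have Fi: "F (i h) = f0 h" for h using F(2)[of "i h"] inj by simp
    define K where "K = closure (i ` K0)"
    have subK: "subspace K" unfolding K_def
      by (rule subspace_closure_lemma[OF linear_subspace_image[OF li subK0]])
    define u0 where "u0 = i h1"
    have u0K: "u0 \<notin> K"
    proof
      assume "u0 \<in> K"
      then obtain a where a: "a \<in> i ` K0" "dist a u0 < 1 / C"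
        unfolding K_def closure_approachable using C(1) by (meson divide_pos_pos zero_less_one)
      obtain k where k: "a = i k" "f0 k = 0" using a(1) unfolding K0_def by blast
      have "1 = \<bar>f0 (h1 - k)\<bar>" using h1 k by (simp add: linear_diff[OF lf])
      also have "\<dots> \<le> C * norm (i (h1 - k))" by (rule C(2))
      also have "\<dots> = C * dist a u0" using k u0_def by (simp add: dist_norm linear_diff[OF li] norm_minus_commute)
      also have "\<dots> < C * (1 / C)" using a(2) C(1) by (intro mult_strict_left_mono) auto
      also have "\<dots> = 1" using C(1) by simp
      finally show False by simp
    qed
    define \<phi> where "\<phi> = (\<lambda>x. x - F x *\<^sub>R u0)"
    have \<phi>c: "continuous_on (closure (range i)) \<phi>"
      unfolding \<phi>_def dense using Fc by (intro continuous_intros) auto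
    have "\<phi> ` range i \<subseteq> K"
    proof
      fix y assume "y \<in> \<phi> ` range i"
      then obtain h where h: "y = \<phi> (i h)" by blast
      have "y = i (h - f0 h *\<^sub>R h1)"
        using h Fi u0_def by (simp add: \<phi>_def linear_diff[OF li] linear_scale[OF li])
      then have "y \<in> i ` K0" using kerm by blast
      then show "y \<in> K" unfolding K_def using closure_subset by blast
    qed
    then have "\<phi> ` closure (range i) \<subseteq> K"
      using image_closure_subset[OF \<phi>c] K_def by (metis closed_closure)
    then have dec: "\<exists>t. x - t *\<^sub>R u0 \<in> K" for x using dense unfolding \<phi>_def by blast
    show ?thesis using codim_one_intro[OF subK u0K dec] K_def by simp
  qed
  have part_b: "closure (i ` K0) = UNIV" if ncont: "\<not> continuous_on (range i) (f0 \<circ> inv i)"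
  proof -
    have nb: "\<exists>k. \<bar>f0 k\<bar> > C * norm (i k)" if C: "C > 0" for C
    proof (rule ccontr)
      assume "\<not> ?thesis"
      then have "\<And>h. \<bar>f0 h\<bar> \<le> C * norm (i h)" by (simp add: not_less)
      then have "uniformly_continuous_on (range i) (f0 \<circ> inv i)"
        using bound_imp_ucont[OF li inj lf C] by blast
      then show False using ncont uniformly_continuous_imp_continuous by blast
    qed
    have "range i \<subseteq> closure (i ` K0)"
    proof
      fix y assume "y \<in> range i"
      then obtain h where h: "y = i h" by blast
      show "y \<in> closure (i ` K0)" unfolding closure_approachable
      proof (intro allI impI)
        fix e :: real assume e: "e > 0"
        define C where "C = (\<bar>f0 h\<bar> + 1) / e"
        have Cp: "C > 0" using e by (simp add: C_def add_nonneg_pos)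
        obtain k where k: "\<bar>f0 k\<bar> > C * norm (i k)" using nb[OF Cp] by blast
        have fk: "f0 k \<noteq> 0" using k Cp by (metis abs_zero mult_nonneg_nonneg norm_ge_zero not_less less_imp_le)
        define c where "c = f0 h / f0 k"
        have mem: "i (h - c *\<^sub>R k) \<in> i ` K0"
          using fk by (simp add: K0_def c_def linear_diff[OF lf] linear_scale[OF lf])
        have "dist (i (h - c *\<^sub>R k)) y = \<bar>c\<bar> * norm (i k)"
          using h by (simp add: dist_norm linear_diff[OF li] linear_scale[OF li])
        also have "\<dots> \<le> \<bar>c\<bar> * (\<bar>f0 k\<bar> / C)"
          using k Cp by (intro mult_left_mono) (auto simp: field_simps)
        also have "\<dots> = \<bar>f0 h\<bar> / C" using fk by (simp add: c_def abs_divide)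
        also have "\<dots> = \<bar>f0 h\<bar> * e / (\<bar>f0 h\<bar> + 1)" using e by (simp add: C_def)
        also have "\<dots> < e"
        proof -
          have "\<bar>f0 h\<bar> * e < (\<bar>f0 h\<bar> + 1) * e" using e by simp
          moreover have pos: "\<bar>f0 h\<bar> + 1 > 0" by (simp add: add_nonneg_pos)
          ultimately show ?thesis by (simp add: pos_divide_less_eq[OF pos] mult.commute)
        qed
        finally show "\<exists>z\<in>i ` K0. dist z y < e" using mem by blast
      qed
    qed
    then have "closure (range i) \<subseteq> closure (i ` K0)" by (rule closure_minimal) simp
    then show ?thesis using dense by blast
  qed
  show ?thesis using part_a part_b unfolding K0_def by blast
qed

theorem proposition5p3:
  fixes i :: "'h::{real_inner, complete_space} \<Rightarrow> 'b::banach"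
  assumes incl_lin_cont: "bounded_linear i"
    and incl_inj: "inj i"
    and dense: "closure (range i) = UNIV"
  shows
    "(\<forall>L::'b set. closed L \<and> codim_one L \<longrightarrow>
        (closed (i -` L) \<and> codim_one (i -` L) \<and> closure (i ` (i -` L)) = L) \<and>
        (\<forall>M::'h set. closed M \<and> codim_one M \<and> closure (i ` M) = L \<longrightarrow> M = i -` L))
     \<and>
     (\<forall>f0::'h \<Rightarrow> real. bounded_linear f0 \<and> f0 \<noteq> (\<lambda>_. 0) \<longrightarrow>
        (continuous_on (range i) (f0 \<circ> inv i) \<longrightarrow> codim_one (closure (i ` {h. f0 h = 0}))) \<and>
        (\<not> continuous_on (range i) (f0 \<circ> inv i) \<longrightarrow> closure (i ` {h. f0 h = 0}) = UNIV))"
proof -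
  note A = part1[OF incl_lin_cont dense]
  note B = part2[OF incl_lin_cont incl_inj dense]
  show ?thesis
  proof (rule conjI)
    show "\<forall>L::'b set. closed L \<and> codim_one L \<longrightarrow>
        (closed (i -` L) \<and> codim_one (i -` L) \<and> closure (i ` (i -` L)) = L) \<and>
        (\<forall>M::'h set. closed M \<and> codim_one M \<and> closure (i ` M) = L \<longrightarrow> M = i -` L)"
      using A by blast
    show "\<forall>f0::'h \<Rightarrow> real. bounded_linear f0 \<and> f0 \<noteq> (\<lambda>_. 0) \<longrightarrow>
        (continuous_on (range i) (f0 \<circ> inv i) \<longrightarrow> codim_one (closure (i ` {h. f0 h = 0}))) \<and>
        (\<not> continuous_on (range i) (f0 \<circ> inv i) \<longrightarrow> closure (i ` {h. f0 h = 0}) = UNIV)"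
      using B by blast
  qed
qed

end
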